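(* Let $A$ be a finite skew brace such that $\Theta(A)$ has exactly one vertex. Then $(A,+)$ is abelian.
   Context: A skew brace is a triple $(A,+,\circ)$ where $(A,+)$ and $(A,\circ)$ are groups with $a\circ(b+c)=a\circ b-a+a\circ c$. $\lambda_a(b)=-a+a\circ b$; $\theta_{(a,b)}(c)=a+\lambda_b(c)-a$ defines an action of $(A,+)\rtimes_\lambda(A,\circ)$ on $(A,+)$ by automorphisms. $\Theta(A)$ is the graph whose vertices are the $\theta$-orbits of size $>1$, two distinct vertices $L_1,L_2$ adjacent iff $\gcd(|L_1|,|L_2|)\ne1$. *)

theory Defs
  imports "HOL-Algebra.Group"
begin

text \<open>A skew brace (A,+,o) is given by two HOL-Algebra groups Add (the group (A,+),
written multiplicatively in the library) and Circ (the group (A,o)) on the same carrier.\<close>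

definition skew_brace :: "('a, 'b) monoid_scheme \<Rightarrow> ('a, 'c) monoid_scheme \<Rightarrow> bool" where
  "skew_brace Add Circ \<longleftrightarrow> group Add \<and> group Circ \<and> carrier Add = carrier Circ \<and>
     (\<forall>a\<in>carrier Add. \<forall>b\<in>carrier Add. \<forall>c\<in>carrier Add.
        a \<otimes>\<^bsub>Circ\<^esub> (b \<otimes>\<^bsub>Add\<^esub> c)
          = (a \<otimes>\<^bsub>Circ\<^esub> b) \<otimes>\<^bsub>Add\<^esub> inv\<^bsub>Add\<^esub> a \<otimes>\<^bsub>Add\<^esub> (a \<otimes>\<^bsub>Circ\<^esub> c))"

definition brace_lambda :: "('a, 'b) monoid_scheme \<Rightarrow> ('a, 'c) monoid_scheme \<Rightarrow> 'a \<Rightarrow> 'a \<Rightarrow> 'a" where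
  "brace_lambda Add Circ a b = inv\<^bsub>Add\<^esub> a \<otimes>\<^bsub>Add\<^esub> (a \<otimes>\<^bsub>Circ\<^esub> b)"

definition brace_theta :: "('a, 'b) monoid_scheme \<Rightarrow> ('a, 'c) monoid_scheme \<Rightarrow> 'a \<Rightarrow> 'a \<Rightarrow> 'a \<Rightarrow> 'a" where
  "brace_theta Add Circ a b c = a \<otimes>\<^bsub>Add\<^esub> brace_lambda Add Circ b c \<otimes>\<^bsub>Add\<^esub> inv\<^bsub>Add\<^esub> a"

definition theta_orbit :: "('a, 'b) monoid_scheme \<Rightarrow> ('a, 'c) monoid_scheme \<Rightarrow> 'a \<Rightarrow> 'a set" where
  "theta_orbit Add Circ c = {brace_theta Add Circ a b c | a b. a \<in> carrier Add \<and> b \<in> carrier Add}"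

definition Theta_vertices :: "('a, 'b) monoid_scheme \<Rightarrow> ('a, 'c) monoid_scheme \<Rightarrow> 'a set set" where
  "Theta_vertices Add Circ =
     {L. (\<exists>c\<in>carrier Add. L = theta_orbit Add Circ c) \<and> card L > 1}"

end

theory Submission
  imports Defs "HOL-Algebra.Group_Action" "HOL-Algebra.Sylow" "HOL-Algebra.Multiplicative_Group"
begin
locale SB = fixes A :: "('a,'b) monoid_scheme" (structure) and C :: "('a,'c) monoid_scheme"
  assumes sb: "skew_brace A C"
begin

sublocale group A using sb unfolding skew_brace_def by auto
sublocale C: group C using sb unfolding skew_brace_def by auto

lemma carrC: "carrier C = carrier A" using sb unfolding skew_brace_def by auto

lemma br: "\<lbrakk>a \<in> carrier A; b \<in> carrier A; c \<in> carrier A\<rbrakk> \<Longrightarrow>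
  a \<otimes>\<^bsub>C\<^esub> (b \<otimes> c) = (a \<otimes>\<^bsub>C\<^esub> b) \<otimes> inv a \<otimes> (a \<otimes>\<^bsub>C\<^esub> c)"
  using sb unfolding skew_brace_def by auto

lemma Cclosed[simp]: "\<lbrakk>a \<in> carrier A; b \<in> carrier A\<rbrakk> \<Longrightarrow> a \<otimes>\<^bsub>C\<^esub> b \<in> carrier A"
  using C.m_closed carrC by auto

lemma r_zero: "a \<in> carrier A \<Longrightarrow> a \<otimes>\<^bsub>C\<^esub> \<one> = a"
proof -
  assume a: "a \<in> carrier A"
  have "a \<otimes>\<^bsub>C\<^esub> \<one> \<otimes> inv a = \<one>"
    using br[of a \<one> \<one>] a by simp
  hence "inv (inv a) = a \<otimes>\<^bsub>C\<^esub> \<one>" using a by (metis inv_equality inv_closed Cclosed one_closed)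
  thus ?thesis using a by simp
qed

lemma oneC[simp]: "\<one>\<^bsub>C\<^esub> = \<one>"
  using r_zero[of "\<one>\<^bsub>C\<^esub>"] carrC by (metis C.l_one C.one_closed one_closed)

definition lam where "lam a b = inv a \<otimes> (a \<otimes>\<^bsub>C\<^esub> b)"

lemma lam_closed[simp]: "\<lbrakk>a \<in> carrier A; b \<in> carrier A\<rbrakk> \<Longrightarrow> lam a b \<in> carrier A"
  by (simp add: lam_def)

lemma lam_hom: "\<lbrakk>a \<in> carrier A; b \<in> carrier A; c \<in> carrier A\<rbrakk> \<Longrightarrow> lam a (b \<otimes> c) = lam a b \<otimes> lam a c"
  by (simp add: lam_def br m_assoc)

lemma lam_one[simp]: "a \<in> carrier A \<Longrightarrow> lam a \<one> = \<one>"
  by (simp add: lam_def r_zero)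

lemma lam_one'[simp]: "b \<in> carrier A \<Longrightarrow> lam \<one> b = b"
  using carrC by (simp add: lam_def)

lemma lam_inv: "\<lbrakk>a \<in> carrier A; b \<in> carrier A\<rbrakk> \<Longrightarrow> lam a (inv b) = inv (lam a b)"
proof -
  assume a: "a \<in> carrier A" and b: "b \<in> carrier A"
  have "lam a b \<otimes> lam a (inv b) = \<one>" using lam_hom[of a b "inv b"] a b by simp
  thus ?thesis using a b by (metis inv_equality lam_closed inv_closed inv_inv m_closed r_inv l_inv)
qed

lemma lam_comp: "\<lbrakk>a \<in> carrier A; b \<in> carrier A; c \<in> carrier A\<rbrakk> \<Longrightarrow> lam a (lam b c) = lam (a \<otimes>\<^bsub>C\<^esub> b) c"
proof -
  assume a: "a \<in> carrier A" and b: "b \<in> carrier A" and c: "c \<in> carrier A"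
  have "lam a (lam b c) = lam a (inv b) \<otimes> lam a (b \<otimes>\<^bsub>C\<^esub> c)"
    unfolding lam_def[of b] using a b c by (simp add: lam_hom)
  also have "\<dots> = inv (inv a \<otimes> (a \<otimes>\<^bsub>C\<^esub> b)) \<otimes> (inv a \<otimes> ((a \<otimes>\<^bsub>C\<^esub> b) \<otimes>\<^bsub>C\<^esub> c))"
    using a b c lam_inv[of a b] by (simp add: lam_def C.m_assoc carrC)
  also have "\<dots> = lam (a \<otimes>\<^bsub>C\<^esub> b) c"
    using a b c by (simp add: lam_def inv_mult_group m_assoc r_inv_ex flip: m_assoc[of a "inv a"])
  finally show ?thesis .
qed

definition SD :: "('a \<times> 'a) monoid" where
  "SD = \<lparr>carrier = carrier A \<times> carrier A,
         monoid.mult = (\<lambda>g h. (fst g \<otimes> lam (snd g) (fst h), snd g \<otimes>\<^bsub>C\<^esub> snd h)),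
         monoid.one = (\<one>, \<one>)\<rparr>"


lemma SD_carrier: "carrier SD = carrier A \<times> carrier A" by (simp add: SD_def)
lemma SD_mult: "(a,b) \<otimes>\<^bsub>SD\<^esub> (a',b') = (a \<otimes> lam b a', b \<otimes>\<^bsub>C\<^esub> b')" by (simp add: SD_def)
lemma SD_one: "\<one>\<^bsub>SD\<^esub> = (\<one>,\<one>)" by (simp add: SD_def)

lemma SD_group: "group SD"
proof (rule groupI)
  show "\<And>x y. x \<in> carrier SD \<Longrightarrow> y \<in> carrier SD \<Longrightarrow> x \<otimes>\<^bsub>SD\<^esub> y \<in> carrier SD"
    by (clarsimp simp: SD_carrier SD_mult)
  show "\<one>\<^bsub>SD\<^esub> \<in> carrier SD" by (simp add: SD_carrier SD_one)
  show "\<And>x y z. x \<in> carrier SD \<Longrightarrow> y \<in> carrier SD \<Longrightarrow> z \<in> carrier SD \<Longrightarrow>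
     x \<otimes>\<^bsub>SD\<^esub> y \<otimes>\<^bsub>SD\<^esub> z = x \<otimes>\<^bsub>SD\<^esub> (y \<otimes>\<^bsub>SD\<^esub> z)"
  proof -
    fix x y z assume "x \<in> carrier SD" "y \<in> carrier SD" "z \<in> carrier SD"
    then obtain a b a' b' a'' b'' where ab: "x = (a,b)" "y = (a',b')" "z = (a'',b'')"
      and c: "a \<in> carrier A" "b \<in> carrier A" "a' \<in> carrier A" "b' \<in> carrier A" "a'' \<in> carrier A" "b'' \<in> carrier A"
      by (auto simp: SD_carrier)
    have "lam b (a' \<otimes> lam b' a'') = lam b a' \<otimes> lam (b \<otimes>\<^bsub>C\<^esub> b') a''"
      using c by (simp add: lam_hom lam_comp)
    moreover have "b \<otimes>\<^bsub>C\<^esub> b' \<otimes>\<^bsub>C\<^esub> b'' = b \<otimes>\<^bsub>C\<^esub> (b' \<otimes>\<^bsub>C\<^esub> b'')"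
      using c carrC by (simp add: C.m_assoc)
    ultimately show "x \<otimes>\<^bsub>SD\<^esub> y \<otimes>\<^bsub>SD\<^esub> z = x \<otimes>\<^bsub>SD\<^esub> (y \<otimes>\<^bsub>SD\<^esub> z)"
      using c by (simp add: ab SD_mult m_assoc)
  qed
  show "\<And>x. x \<in> carrier SD \<Longrightarrow> \<one>\<^bsub>SD\<^esub> \<otimes>\<^bsub>SD\<^esub> x = x"
  proof -
    fix x assume "x \<in> carrier SD"
    then obtain a b where ab: "x = (a,b)" "a \<in> carrier A" "b \<in> carrier A" by (auto simp: SD_carrier)
    have "\<one> \<otimes>\<^bsub>C\<^esub> b = b" using ab carrC C.l_one by (metis oneC)
    thus "\<one>\<^bsub>SD\<^esub> \<otimes>\<^bsub>SD\<^esub> x = x" using ab by (simp add: SD_one SD_mult)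
  qed
  show "\<And>x. x \<in> carrier SD \<Longrightarrow> \<exists>y\<in>carrier SD. y \<otimes>\<^bsub>SD\<^esub> x = \<one>\<^bsub>SD\<^esub>"
  proof -
    fix x assume x: "x \<in> carrier SD"
    then obtain a b where ab: "x = (a,b)" "a \<in> carrier A" "b \<in> carrier A" by (auto simp: SD_carrier)
    define y where "y = inv\<^bsub>C\<^esub> b"
    have y: "y \<in> carrier A" using ab carrC y_def by auto
    have e: "y \<otimes>\<^bsub>C\<^esub> b = \<one>" using y_def ab carrC by simp
    have "(inv (lam y a), y) \<otimes>\<^bsub>SD\<^esub> x = \<one>\<^bsub>SD\<^esub>"
      using y ab e by (simp add: SD_mult SD_one)
    moreover have "(inv (lam y a), y) \<in> carrier SD" using y ab by (simp add: SD_carrier)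
    ultimately show "\<exists>y\<in>carrier SD. y \<otimes>\<^bsub>SD\<^esub> x = \<one>\<^bsub>SD\<^esub>" by blast
  qed
qed


lemma lcan: "\<lbrakk>x \<in> carrier A; z \<in> carrier A\<rbrakk> \<Longrightarrow> inv x \<otimes> (x \<otimes> z) = z"
  by (simp add: m_assoc[symmetric])

definition theta where "theta g c = fst g \<otimes> lam (snd g) c \<otimes> inv (fst g)"

lemma theta_closed[simp]: "\<lbrakk>g \<in> carrier SD; c \<in> carrier A\<rbrakk> \<Longrightarrow> theta g c \<in> carrier A"
  by (cases g) (simp add: theta_def SD_carrier)

lemma theta_comp: "\<lbrakk>g \<in> carrier SD; h \<in> carrier SD; c \<in> carrier A\<rbrakk> \<Longrightarrow>
   theta g (theta h c) = theta (g \<otimes>\<^bsub>SD\<^esub> h) c"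
proof -
  assume "g \<in> carrier SD" "h \<in> carrier SD" and c: "c \<in> carrier A"
  then obtain a b a' b' where ab: "g = (a,b)" "h = (a',b')"
      and cc: "a \<in> carrier A" "b \<in> carrier A" "a' \<in> carrier A" "b' \<in> carrier A"
      by (auto simp: SD_carrier)
  have "lam b (a' \<otimes> lam b' c \<otimes> inv a') = lam b a' \<otimes> lam (b \<otimes>\<^bsub>C\<^esub> b') c \<otimes> inv (lam b a')"
    using cc c by (simp add: lam_hom lam_comp lam_inv)
  thus ?thesis using cc c by (simp add: ab theta_def SD_mult m_assoc inv_mult_group)
qed


lemma theta_one: "c \<in> carrier A \<Longrightarrow> theta \<one>\<^bsub>SD\<^esub> c = c"
  by (simp add: theta_def SD_one)

lemma theta_hom: "\<lbrakk>g \<in> carrier SD; x \<in> carrier A; y \<in> carrier A\<rbrakk> \<Longrightarrow>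
   theta g (x \<otimes> y) = theta g x \<otimes> theta g y"
  by (cases g) (simp add: theta_def SD_carrier lam_hom m_assoc lcan)

definition phi where "phi g = (\<lambda>c\<in>carrier A. theta g c)"


lemma action: "group_action SD (carrier A) phi"
proof -
  interpret S: group SD by (rule SD_group)
  have bij: "phi g \<in> Bij (carrier A)" if g: "g \<in> carrier SD" for g
  proof -
    have "bij_betw (theta g) (carrier A) (carrier A)"
    proof (rule bij_betw_byWitness[where f'="theta (inv\<^bsub>SD\<^esub> g)"])
      show "\<forall>a\<in>carrier A. theta (inv\<^bsub>SD\<^esub> g) (theta g a) = a"
        using g by (simp add: theta_comp theta_one del: theta_closed)
      show "\<forall>a\<in>carrier A. theta g (theta (inv\<^bsub>SD\<^esub> g) a) = a"
        using g by (simp add: theta_comp theta_one del: theta_closed)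
      show "theta g ` carrier A \<subseteq> carrier A" using g theta_closed by blast
      show "theta (inv\<^bsub>SD\<^esub> g) ` carrier A \<subseteq> carrier A" using g theta_closed S.inv_closed by blast
    qed
    hence "bij_betw (phi g) (carrier A) (carrier A)"
      unfolding phi_def by (simp only: bij_betw_restrict_eq)
    moreover have "phi g \<in> extensional (carrier A)" unfolding phi_def by (rule restrict_extensional)
    ultimately show ?thesis unfolding Bij_def by blast
  qed
  show ?thesis
    unfolding group_action_def group_hom_def group_hom_axioms_def
  proof (intro conjI)
    show "group SD" by (rule SD_group)
    show "group (BijGroup (carrier A))" by (rule group_BijGroup)
    show "phi \<in> hom SD (BijGroup (carrier A))"
    proof (rule homI)
      show "\<And>x. x \<in> carrier SD \<Longrightarrow> phi x \<in> carrier (BijGroup (carrier A))"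
        using bij by (simp add: BijGroup_def)
      fix x y assume x: "x \<in> carrier SD" and y: "y \<in> carrier SD"
      have "phi x \<otimes>\<^bsub>BijGroup (carrier A)\<^esub> phi y = compose (carrier A) (phi x) (phi y)"
        using bij x y by (simp add: BijGroup_def)
      also have "\<dots> = phi (x \<otimes>\<^bsub>SD\<^esub> y)"
        unfolding compose_def phi_def using x y by (intro ext) (simp add: theta_comp)
      finally show "phi (x \<otimes>\<^bsub>SD\<^esub> y) = phi x \<otimes>\<^bsub>BijGroup (carrier A)\<^esub> phi y" by simp
    qed
  qed
qed


lemma theta_pt: "\<lbrakk>a \<in> carrier A; b \<in> carrier A\<rbrakk> \<Longrightarrow> brace_theta A C a b c = theta (a,b) c"
  by (simp add: brace_theta_def brace_lambda_def theta_def lam_def)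

lemma orbit_eq: "theta_orbit A C c = orbit SD phi c" if "c \<in> carrier A"
proof -
  have "theta_orbit A C c = {theta g c | g. g \<in> carrier SD}"
  proof (rule equalityI; rule subsetI)
    fix y assume "y \<in> theta_orbit A C c"
    then obtain a b where "y = brace_theta A C a b c" "a \<in> carrier A" "b \<in> carrier A"
      unfolding theta_orbit_def by blast
    thus "y \<in> {theta g c | g. g \<in> carrier SD}" by (auto simp: theta_pt SD_carrier)
  next
    fix y assume "y \<in> {theta g c | g. g \<in> carrier SD}"
    then obtain a b where "y = theta (a,b) c" "a \<in> carrier A" "b \<in> carrier A"
      unfolding SD_carrier by blast
    hence "y = brace_theta A C a b c" "a \<in> carrier A" "b \<in> carrier A" by (simp_all add: theta_pt)
    thus "y \<in> theta_orbit A C c" unfolding theta_orbit_def by blast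
  qed
  also have "\<dots> = orbit SD phi c"
    unfolding orbit_def phi_def using that by auto
  finally show ?thesis .
qed

definition F where "F = {c \<in> carrier A. \<forall>g\<in>carrier SD. theta g c = c}"

lemma theta_1[simp]: "g \<in> carrier SD \<Longrightarrow> theta g \<one> = \<one>"
  by (cases g) (simp add: theta_def SD_carrier)

lemma theta_inv: "\<lbrakk>g \<in> carrier SD; x \<in> carrier A\<rbrakk> \<Longrightarrow> theta g (inv x) = inv (theta g x)"
proof -
  assume g: "g \<in> carrier SD" and x: "x \<in> carrier A"
  have "theta g x \<otimes> theta g (inv x) = \<one>" using theta_hom[of g x "inv x"] g x by simp
  thus ?thesis using g x by (metis inv_equality theta_closed inv_closed inv_inv)
qed

lemma F_sub: "subgroup F A"
proof (rule subgroupI)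
  show "F \<subseteq> carrier A" unfolding F_def by auto
  show "F \<noteq> {}" unfolding F_def by auto
  show "\<And>a. a \<in> F \<Longrightarrow> inv a \<in> F" unfolding F_def by (auto simp: theta_inv)
  show "\<And>a b. a \<in> F \<Longrightarrow> b \<in> F \<Longrightarrow> a \<otimes> b \<in> F" unfolding F_def by (auto simp: theta_hom)
qed

lemma F_central: "\<lbrakk>c \<in> F; a \<in> carrier A\<rbrakk> \<Longrightarrow> a \<otimes> c = c \<otimes> a"
proof -
  assume c: "c \<in> F" and a: "a \<in> carrier A"
  have cA: "c \<in> carrier A" using c F_def by auto
  have "theta (a,\<one>) c = c" using c a unfolding F_def SD_carrier by auto
  hence "a \<otimes> c \<otimes> inv a = c" using cA by (simp add: theta_def)
  hence "a \<otimes> c \<otimes> inv a \<otimes> a = c \<otimes> a" by simp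
  thus ?thesis using a cA by (simp add: m_assoc)
qed

lemma theta_pow: "\<lbrakk>g \<in> carrier SD; x \<in> carrier A\<rbrakk> \<Longrightarrow> theta g (x [^] (n::nat)) = theta g x [^] n"
  by (induct n) (simp_all add: theta_hom)

lemma theta_inj: "\<lbrakk>g \<in> carrier SD; x \<in> carrier A; y \<in> carrier A; theta g x = theta g y\<rbrakk> \<Longrightarrow> x = y"
proof -
  interpret S: group SD by (rule SD_group)
  assume g: "g \<in> carrier SD" and xy: "x \<in> carrier A" "y \<in> carrier A" "theta g x = theta g y"
  have "theta (inv\<^bsub>SD\<^esub> g) (theta g x) = theta (inv\<^bsub>SD\<^esub> g) (theta g y)" using xy by simp
  moreover have "theta (inv\<^bsub>SD\<^esub> g) (theta g z) = z" if "z \<in> carrier A" for z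
    using g that by (simp add: theta_comp theta_one del: theta_closed)
  ultimately show ?thesis using xy by metis
qed

lemma ord_theta: "\<lbrakk>g \<in> carrier SD; x \<in> carrier A\<rbrakk> \<Longrightarrow> ord (theta g x) = ord x"
proof -
  assume g: "g \<in> carrier SD" and x: "x \<in> carrier A"
  have "\<And>n. (theta g x [^] (n::nat) = \<one>) \<longleftrightarrow> (x [^] n = \<one>)"
  proof -
    fix n :: nat
    have "theta g x [^] n = \<one> \<longleftrightarrow> theta g (x [^] n) = theta g \<one>"
      using g x by (simp add: theta_pow)
    also have "\<dots> \<longleftrightarrow> x [^] n = \<one>" using g x theta_inj[of g "x [^] n" \<one>] by auto
    finally show "(theta g x [^] n = \<one>) \<longleftrightarrow> (x [^] n = \<one>)" .
  qed
  thus ?thesis using g x by (simp add: ord_unique pow_eq_id)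
qed

end
lemma cauchy_elem:
  fixes G (structure)
  assumes G: "group G" and fin: "finite (carrier G)" and p: "prime p" and dvd: "p dvd order G"
  shows "\<exists>z\<in>carrier G. group.ord G z = p"
proof -
  interpret group G by (rule G)
  have "order G = p ^ 1 * (order G div p)" using dvd by simp
  from sylow_thm[OF p G this fin] obtain H where H: "subgroup H G" "card H = p"
    by auto
  have "card H \<ge> 2" using H p prime_ge_2_nat by auto
  hence "\<not> H \<subseteq> {\<one>}" using card_mono[of "{\<one>}" H] by auto
  then obtain h where h: "h \<in> H" "h \<noteq> \<one>" by blast
  have hc: "h \<in> carrier G" using H h subgroup.subset by blast
  interpret K: group "G\<lparr>carrier := H\<rparr>" using H subgroup.subgroup_is_group G by blast
  have "h [^]\<^bsub>G\<lparr>carrier := H\<rparr>\<^esub> order (G\<lparr>carrier := H\<rparr>) = \<one>\<^bsub>G\<lparr>carrier := H\<rparr>\<^esub>"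
    using K.pow_order_eq_1 h by simp
  hence "h [^]\<^bsub>G\<lparr>carrier := H\<rparr>\<^esub> p = \<one>" using H by (simp add: order_def)
  hence "h [^] p = \<one>" using nat_pow_consistent[of h p H] by simp
  hence "ord h dvd p" using hc pow_eq_id by blast
  hence "ord h = 1 \<or> ord h = p" using p prime_nat_iff by blast
  thus ?thesis using hc h ord_eq_1 by blast
qed


context SB begin

lemma sub_pow: "subgroup H A \<Longrightarrow> x \<in> H \<Longrightarrow> x [^] (n::nat) \<in> H"
  by (induct n) (auto simp: subgroup.one_closed subgroup.m_closed)

lemma main:
  assumes fin: "finite (carrier A)" and one1: "card (Theta_vertices A C) = 1"
  shows "comm_group A"
proof -
  interpret GA: group_action SD "carrier A" phi by (rule action)
  have oneSD: "\<one>\<^bsub>SD\<^esub> \<in> carrier SD" by (simp add: SD_carrier SD_one)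
  have Fc: "F \<subseteq> carrier A" unfolding F_def by auto
  obtain L0 where TV: "Theta_vertices A C = {L0}" using one1 card_1_singletonE by blast
  hence "L0 \<in> Theta_vertices A C" by simp
  then obtain c0 where c0: "c0 \<in> carrier A" "L0 = theta_orbit A C c0" and cL: "card L0 > 1"
    unfolding Theta_vertices_def by blast
  have Lorb: "L0 = orbit SD phi c0" using c0 orbit_eq by simp
  have orb_alt: "orbit SD phi c = {theta g c | g. g \<in> carrier SD}" if "c \<in> carrier A" for c
    unfolding orbit_def phi_def using that by auto
  have orbF: "orbit SD phi c = {c}" if "c \<in> F" for c
  proof -
    have cc: "c \<in> carrier A" and all: "\<forall>g\<in>carrier SD. theta g c = c" using that F_def by auto
    have "c = theta \<one>\<^bsub>SD\<^esub> c" using theta_one[OF cc] by simp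
    hence "c \<in> {theta g c | g. g \<in> carrier SD}" unfolding mem_Collect_eq
      by (intro exI[of _ "\<one>\<^bsub>SD\<^esub>"]) (simp add: oneSD)
    moreover have "{theta g c | g. g \<in> carrier SD} \<subseteq> {c}" using all by auto
    ultimately have "{theta g c | g. g \<in> carrier SD} = {c}" by blast
    thus ?thesis using orb_alt[OF cc] by simp
  qed
  have orb_sub: "orbit SD phi c \<subseteq> carrier A" if "c \<in> carrier A" for c
    unfolding orb_alt[OF that] using that theta_closed by auto
  have notF_card: "card (orbit SD phi c) > 1" if c: "c \<in> carrier A" "c \<notin> F" for c
  proof -
    obtain g where g: "g \<in> carrier SD" "theta g c \<noteq> c" using c unfolding F_def by auto
    have "c = theta \<one>\<^bsub>SD\<^esub> c" using theta_one c by simp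
    hence "c \<in> {theta g c | g. g \<in> carrier SD}" unfolding mem_Collect_eq
      by (intro exI[of _ "\<one>\<^bsub>SD\<^esub>"]) (simp add: oneSD)
    moreover have "theta g c \<in> {theta g c | g. g \<in> carrier SD}" unfolding mem_Collect_eq
      by (intro exI[of _ g]) (simp add: g)
    ultimately have "{c, theta g c} \<subseteq> orbit SD phi c"
      unfolding orb_alt[OF c(1)] by blast
    moreover have "finite (orbit SD phi c)" using orb_sub[OF c(1)] fin finite_subset by blast
    ultimately have "card {c, theta g c} \<le> card (orbit SD phi c)" by (rule card_mono[rotated])
    thus ?thesis using g by simp
  qed
  have Leq: "L0 = carrier A - F"
  proof (rule equalityI; rule subsetI)
    fix y assume y: "y \<in> L0"
    have yc: "y \<in> carrier A" using y Lorb orb_sub[OF c0(1)] by blast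
    have "y \<notin> F"
    proof
      assume yF: "y \<in> F"
      have "c0 \<in> orbit SD phi y" using GA.orbit_sym[OF c0(1) yc] y Lorb by simp
      hence "c0 = y" using orbF[OF yF] by simp
      hence "L0 = {y}" using Lorb orbF[OF yF] by simp
      thus False using cL by simp
    qed
    thus "y \<in> carrier A - F" using yc by simp
  next
    fix c assume c: "c \<in> carrier A - F"
    have "theta_orbit A C c \<in> Theta_vertices A C"
      unfolding Theta_vertices_def using c notF_card[of c] orbit_eq[of c] by auto
    hence "orbit SD phi c = L0" using TV orbit_eq[of c] c by simp
    thus "c \<in> L0" using GA.orbit_refl[of c] c by auto
  qed
  define n where "n = ord c0"
  have ordL: "ord y = n" if "y \<in> L0" for y
  proof -
    have "y \<in> {theta g c0 | g. g \<in> carrier SD}" using that Lorb orb_alt[OF c0(1)] by simp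
    then obtain g where "g \<in> carrier SD" "y = theta g c0"
      unfolding mem_Collect_eq by (elim exE conjE) simp
    thus ?thesis using ord_theta c0 n_def by simp
  qed
  have c0L: "c0 \<in> L0" using Lorb GA.orbit_refl c0 by simp
  have c0F: "c0 \<notin> F" using c0L Leq by simp
  have Fs: "subgroup F A" by (rule F_sub)
  have oneF: "\<one> \<in> F" using Fs subgroup.one_closed by blast
  have n1: "n \<ge> 1" using ord_ge_1[OF fin c0(1)] n_def by simp
  have nn1: "n \<noteq> 1" using ord_eq_1[OF c0(1)] n_def c0F oneF by auto
  have xpow: "x [^] s \<in> F" if x: "x \<in> L0" and s: "prime s" "s dvd n" for x s
  proof (rule ccontr)
    assume nF: "x [^] s \<notin> F"
    have xc: "x \<in> carrier A" using x Leq by simp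
    have "x [^] s \<in> L0" using nF xc Leq by simp
    hence "ord (x [^] s) = n" using ordL by simp
    moreover have "ord (x [^] s) = n div s" using ord_pow[OF xc] s ordL[OF x] prime_gt_0_nat by auto
    moreover have "n div s < n" using n1 s prime_gt_1_nat by simp
    ultimately show False by simp
  qed
  obtain r where r: "prime r" "r dvd n" using prime_factor_nat[OF nn1] by blast
  have uniq: "s = r" if s: "prime s" "s dvd n" for s
  proof (rule ccontr)
    assume sr: "s \<noteq> r"
    have cop: "coprime s r" using s r sr primes_coprime by blast
    obtain u v where uv: "s * u = r * v + gcd s r" using bezout_nat[of s r] s prime_gt_0_nat by auto
    hence uv': "s * u = Suc (r * v)" using cop by simp
    have a1: "c0 [^] s \<in> F" using xpow c0L s by blast
    have a2: "c0 [^] r \<in> F" using xpow c0L r by blast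
    have b1: "c0 [^] (s * u) \<in> F" using sub_pow[OF Fs a1, of u] c0 by (simp add: nat_pow_pow)
    have b2: "c0 [^] (r * v) \<in> F" using sub_pow[OF Fs a2, of v] c0 by (simp add: nat_pow_pow)
    have "c0 [^] (s * u) = c0 [^] (r * v) \<otimes> c0" using uv' c0 by simp
    hence "c0 = inv (c0 [^] (r * v)) \<otimes> c0 [^] (s * u)" using c0 by (simp add: lcan)
    moreover have "inv (c0 [^] (r * v)) \<otimes> c0 [^] (s * u) \<in> F"
      using b1 b2 subgroup.m_closed[OF Fs] subgroup.m_inv_closed[OF Fs] by blast
    ultimately have "c0 \<in> F" by simp
    thus False using c0F by simp
  qed
  have primes_m: "s = r" if s: "prime s" "s dvd order A" for s
  proof -
    obtain z where z: "z \<in> carrier A" "ord z = s" using cauchy_elem[OF is_group fin s] by blast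
    have "s dvd n"
    proof (cases "z \<in> F")
      case True
      have "c0 \<otimes> z \<notin> F"
      proof
        assume "c0 \<otimes> z \<in> F"
        hence "c0 \<otimes> z \<otimes> inv z \<in> F" using True subgroup.m_closed[OF Fs] subgroup.m_inv_closed[OF Fs] by blast
        thus False using c0 z c0F by (simp add: m_assoc)
      qed
      hence "c0 \<otimes> z \<in> L0" using Leq c0 z by simp
      hence "(c0 \<otimes> z) [^] n = \<one>" using ordL c0 z pow_ord_eq_1[of "c0 \<otimes> z"] by simp
      moreover have "(c0 \<otimes> z) [^] n = c0 [^] n \<otimes> z [^] n"
        using pow_mult_distrib[OF F_central[OF True c0(1)] c0(1) z(1)] .
      moreover have "c0 [^] n = \<one>" using n_def c0 by simp
      ultimately have "z [^] n = \<one>" using z by simp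
      thus ?thesis using z pow_eq_id by blast
    next
      case False
      hence "z \<in> L0" using Leq z by simp
      thus ?thesis using ordL z by simp
    qed
    thus ?thesis using uniq s by blast
  qed
  show ?thesis
  proof (cases "F = carrier A")
    case True
    show ?thesis by (rule group_comm_groupI) (simp add: F_central True)
  next
    case False
    define m where "m = order A"
    define f where "f = card F"
    have finF: "finite F" using Fc fin finite_subset by blast
    have f0: "f > 0" using finF oneF f_def card_gt_0_iff by blast
    have "card (rcosets F) * f = m" using lagrange[OF Fs] f_def m_def by simp
    then obtain k where k: "m = f * k" by (metis mult.commute)
    have "F \<subset> carrier A" using False Fc by auto
    hence fm: "f < m" using psubset_card_mono[OF fin] f_def m_def order_def by metis
    have k2: "k \<ge> 2"
    proof (rule ccontr)
      assume "\<not> k \<ge> 2"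
      hence "k = 0 \<or> k = 1" by auto
      thus False using k fm f0 by auto
    qed
    have cardL: "card L0 = m - f" using Leq card_Diff_subset[OF finF Fc] unfolding m_def f_def order_def by simp
    have "card (orbit SD phi c0) * card (stabilizer SD phi c0) = order SD"
      by (rule GA.orbit_stabilizer_theorem[OF c0(1)])
    moreover have "order SD = m * m" unfolding order_def SD_carrier m_def by (simp add: card_cartesian_product order_def)
    ultimately have e: "card L0 * card (stabilizer SD phi c0) = m * m" using Lorb by simp
    have Ldvd: "card L0 dvd m * m" unfolding e[symmetric] by (rule dvd_triv_left)
    have Lf: "card L0 = f * (k - 1)" using cardL k by (simp add: right_diff_distrib')
    have rk: "r dvd k"
    proof -
      obtain p where p: "prime p" "p dvd k" using prime_factor_nat[of k] k2 by auto
      have "p dvd m" using p k by simp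
      hence "p = r" using primes_m p m_def by simp
      thus ?thesis using p by simp
    qed
    have k1: "k - 1 = 1"
    proof (rule ccontr)
      assume "k - 1 \<noteq> 1"
      then obtain p where p: "prime p" "p dvd k - 1" using prime_factor_nat by blast
      have "p dvd card L0" unfolding Lf using p(2) by (rule dvd_mult)
      hence "p dvd m * m" using Ldvd by (rule dvd_trans)
      hence "p dvd m" using p prime_dvd_mult_nat by blast
      hence "p = r" using primes_m p m_def by simp
      hence "r dvd k - (k - 1)" using rk p dvd_diff_nat by blast
      hence "r dvd 1" using k2 by simp
      thus False using r by simp
    qed
    have cardL2: "card L0 = f" using Lf k1 by simp
    define S where "S = (\<lambda>z. c0 \<otimes> z) ` F"
    have SL: "S \<subseteq> L0"
    proof
      fix y assume "y \<in> S"
      then obtain z where z: "z \<in> F" "y = c0 \<otimes> z" unfolding S_def by blast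
      have zc: "z \<in> carrier A" using z Fc by blast
      have "y \<notin> F"
      proof
        assume "y \<in> F"
        hence "c0 \<otimes> z \<otimes> inv z \<in> F" using z subgroup.m_closed[OF Fs] subgroup.m_inv_closed[OF Fs] by blast
        thus False using c0 zc c0F by (simp add: m_assoc)
      qed
      thus "y \<in> L0" using Leq z zc c0 by simp
    qed
    have "inj_on (\<lambda>z. c0 \<otimes> z) F" using c0(1) Fc unfolding inj_on_def using Units_l_cancel Units_eq by (metis subsetD)
    hence "card S = f" unfolding S_def f_def by (simp add: card_image)
    moreover have "finite L0" using Leq fin by simp
    ultimately have SLeq: "S = L0" using SL cardL2 card_subset_eq[of L0 S] by simp
    have decomp: "\<exists>z\<in>F. x = c0 \<otimes> z" if "x \<in> carrier A" "x \<notin> F" for x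
      using that SLeq Leq unfolding S_def by auto
    show ?thesis
    proof (rule group_comm_groupI)
      fix x y assume x: "x \<in> carrier A" and y: "y \<in> carrier A"
      show "x \<otimes> y = y \<otimes> x"
      proof (cases "x \<in> F \<or> y \<in> F")
        case True
        thus ?thesis using F_central[OF _ x] F_central[OF _ y] by auto
      next
        case False
        obtain z1 where z1: "z1 \<in> F" "x = c0 \<otimes> z1" using decomp x False by blast
        obtain z2 where z2: "z2 \<in> F" "y = c0 \<otimes> z2" using decomp y False by blast
        note z = z1(1) z2(1) z1(2) z2(2)
        have zc: "z1 \<in> carrier A" "z2 \<in> carrier A" using z Fc by auto
        have "x \<otimes> y = c0 \<otimes> (z1 \<otimes> (c0 \<otimes> z2))" using z zc c0 by (simp add: m_assoc)
        also have "\<dots> = c0 \<otimes> ((c0 \<otimes> z2) \<otimes> z1)" using F_central[OF z(1), of "c0 \<otimes> z2"] zc c0 by simp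
        also have "\<dots> = c0 \<otimes> (c0 \<otimes> (z2 \<otimes> z1))" using zc c0 by (simp add: m_assoc)
        also have "\<dots> = c0 \<otimes> (c0 \<otimes> (z1 \<otimes> z2))" using F_central[OF z(1) zc(2)] by simp
        also have "\<dots> = c0 \<otimes> ((c0 \<otimes> z1) \<otimes> z2)" using zc c0 by (simp add: m_assoc)
        also have "\<dots> = c0 \<otimes> (z2 \<otimes> (c0 \<otimes> z1))" using F_central[OF z(2), of "c0 \<otimes> z1"] zc c0 by simp
        also have "\<dots> = y \<otimes> x" using z zc c0 by (simp add: m_assoc)
        finally show ?thesis .
      qed
    qed
  qed
qed

end


theorem mainTheorem19:
  fixes Add :: "('a, 'b) monoid_scheme" and Circ :: "('a, 'c) monoid_scheme"
  assumes "skew_brace Add Circ"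
    and "finite (carrier Add)"
    and "card (Theta_vertices Add Circ) = 1"
  shows "comm_group Add"
proof -
  interpret SB Add Circ by unfold_locales (rule assms(1))
  show ?thesis using main assms(2,3) by blast
qed

end
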